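(* Let $n,m\ge1$ and $p_{n,m}$ stable of degree $n$ in $z$ and $m$ in $w$. In $L^2\!\left(\frac{d\sigma}{|p_{n,m}|^2}\right)$, the reproducing kernel of $$\mathcal{H}=\overline{\operatorname{span}}\{z^iw^j:(0,0)\le(i,j),\ (i,j)\ngeq(n,m)\}$$ at points $(z_1,w_1)\in\mathbb{D}^2$ is $$\frac{p_{n,m}(z,w)\overline{p_{n,m}(z_1,w_1)}-\tilde p_{n,m}(z,w)\overline{\tilde p_{n,m}(z_1,w_1)}}{(1-z\bar z_1)(1-w\bar w_1)}.$$ *)

theory Defs
  imports "HOL-Analysis.Analysis"
begin

definition bipoly :: "(nat \<Rightarrow> nat \<Rightarrow> complex) \<Rightarrow> nat \<Rightarrow> nat \<Rightarrow> complex \<Rightarrow> complex \<Rightarrow> complex" where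
  "bipoly c n m z w = (\<Sum>i\<le>n. \<Sum>j\<le>m. c i j * z ^ i * w ^ j)"

text \<open>The reflection p~(z,w) = z^n w^m conj(p(1/conj z, 1/conj w)), written out as a polynomial.\<close>
definition bipoly_refl :: "(nat \<Rightarrow> nat \<Rightarrow> complex) \<Rightarrow> nat \<Rightarrow> nat \<Rightarrow> complex \<Rightarrow> complex \<Rightarrow> complex" where
  "bipoly_refl c n m z w = (\<Sum>i\<le>n. \<Sum>j\<le>m. cnj (c i j) * z ^ (n - i) * w ^ (m - j))"

definition stable2 :: "(complex \<Rightarrow> complex \<Rightarrow> complex) \<Rightarrow> bool" where
  "stable2 p \<longleftrightarrow> (\<forall>z w. cmod z \<le> 1 \<longrightarrow> cmod w \<le> 1 \<longrightarrow> p z w \<noteq> 0)"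

definition torus_measure :: "(complex \<times> complex) measure" where
  "torus_measure = distr (uniform_measure lborel ({0..2*pi} \<times> {0..2*pi}))
      borel (\<lambda>(s, t). (cis s, cis t))"

definition weighted_torus :: "(complex \<Rightarrow> complex \<Rightarrow> complex) \<Rightarrow> (complex \<times> complex) measure" where
  "weighted_torus p = density torus_measure (\<lambda>x. ennreal (1 / (cmod (p (fst x) (snd x)))\<^sup>2))"

definition idx_set :: "nat \<Rightarrow> nat \<Rightarrow> (nat \<times> nat) set" where
  "idx_set n m = {(i, j). \<not> (n \<le> i \<and> m \<le> j)}"

definition mono_comb :: "(nat \<times> nat) set \<Rightarrow> (nat \<times> nat \<Rightarrow> complex) \<Rightarrow> complex \<times> complex \<Rightarrow> complex" where
  "mono_comb F a x = (\<Sum>(i, j)\<in>F. a (i, j) * fst x ^ i * snd x ^ j)"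

end

theory Submission
  imports Defs "HOL-Computational_Algebra.Fundamental_Theorem_Algebra"
begin

definition good :: "(complex \<Rightarrow> complex) \<Rightarrow> bool" where
  "good h \<longleftrightarrow> (\<exists>b. summable (\<lambda>k. norm (b k)) \<and> (\<forall>z. cmod z \<le> 1 \<longrightarrow> (\<lambda>k. b k * z ^ k) sums h z))"

lemma good_const: "good (\<lambda>z. c)"
  unfolding good_def
proof (intro exI[of _ "\<lambda>k. if k = 0 then c else 0"] conjI allI impI)
  show "summable (\<lambda>k. norm (if k = 0 then c else 0))"
    by (rule summable_finite[of "{0}"]) auto
  fix z :: complex
  have "(\<lambda>k. (if k = 0 then c else 0) * z ^ k) = (\<lambda>k. if k = 0 then c else 0)" by auto
  then show "(\<lambda>k. (if k = 0 then c else 0) * z ^ k) sums c"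
    using sums_single[of 0 "\<lambda>_. c"] by simp
qed

lemma good_add: "good f \<Longrightarrow> good g \<Longrightarrow> good (\<lambda>z. f z + g z)"
  unfolding good_def
proof (elim exE conjE)
  fix a b assume a: "summable (\<lambda>k. norm (a k))" "\<forall>z. cmod z \<le> 1 \<longrightarrow> (\<lambda>k. a k * z ^ k) sums f z"
    and b: "summable (\<lambda>k. norm (b k))" "\<forall>z. cmod z \<le> 1 \<longrightarrow> (\<lambda>k. b k * z ^ k) sums g z"
  show "\<exists>c. summable (\<lambda>k. norm (c k)) \<and> (\<forall>z. cmod z \<le> 1 \<longrightarrow> (\<lambda>k. c k * z ^ k) sums (f z + g z))"
  proof (intro exI[of _ "\<lambda>k. a k + b k"] conjI allI impI)
    show "summable (\<lambda>k. norm (a k + b k))"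
      by (rule summable_comparison_test[OF _ summable_add[OF a(1) b(1)]]) (auto intro: norm_triangle_ineq)
    fix z :: complex assume "cmod z \<le> 1"
    then show "(\<lambda>k. (a k + b k) * z ^ k) sums (f z + g z)"
      using sums_add[of "\<lambda>k. a k * z^k" _ "\<lambda>k. b k * z^k"] a b by (simp add: distrib_right)
  qed
qed

lemma norm_pow_le: "cmod z \<le> 1 \<Longrightarrow> norm (c * z ^ k) \<le> norm c"
  by (simp add: norm_mult norm_power mult_left_le power_le_one)

lemma good_mult: "good f \<Longrightarrow> good g \<Longrightarrow> good (\<lambda>z. f z * g z)"
  unfolding good_def
proof (elim exE conjE)
  fix a b assume a: "summable (\<lambda>k. norm (a k))" "\<forall>z. cmod z \<le> 1 \<longrightarrow> (\<lambda>k. a k * z ^ k) sums f z"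
    and b: "summable (\<lambda>k. norm (b k))" "\<forall>z. cmod z \<le> 1 \<longrightarrow> (\<lambda>k. b k * z ^ k) sums g z"
  show "\<exists>c. summable (\<lambda>k. norm (c k)) \<and> (\<forall>z. cmod z \<le> 1 \<longrightarrow> (\<lambda>k. c k * z ^ k) sums (f z * g z))"
  proof (intro exI[of _ "\<lambda>k. \<Sum>i\<le>k. a i * b (k - i)"] conjI allI impI)
    have "(\<lambda>k. \<Sum>i\<le>k. norm (a i) * norm (b (k - i))) sums ((\<Sum>k. norm (a k)) * (\<Sum>k. norm (b k)))"
      using Cauchy_product_sums[of "\<lambda>k. norm (a k)" "\<lambda>k. norm (b k)"] a b by simp
    then have "summable (\<lambda>k. \<Sum>i\<le>k. norm (a i) * norm (b (k - i)))" by (rule sums_summable)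
    then show "summable (\<lambda>k. norm (\<Sum>i\<le>k. a i * b (k - i)))"
      by (rule summable_comparison_test[rotated])
         (auto intro!: exI[of _ 0] order.trans[OF norm_sum] simp: norm_mult)
    fix z :: complex assume z: "cmod z \<le> 1"
    have sa: "summable (\<lambda>k. norm (a k * z ^ k))"
      by (rule summable_comparison_test[OF _ a(1)]) (auto intro!: exI[of _ 0] norm_pow_le z)
    have sb: "summable (\<lambda>k. norm (b k * z ^ k))"
      by (rule summable_comparison_test[OF _ b(1)]) (auto intro!: exI[of _ 0] norm_pow_le z)
    have "(\<lambda>k. \<Sum>i\<le>k. (a i * z ^ i) * (b (k - i) * z ^ (k - i))) sums ((\<Sum>k. a k * z ^ k) * (\<Sum>k. b k * z ^ k))"
      by (rule Cauchy_product_sums[OF sa sb])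
    moreover have "(\<Sum>k. a k * z ^ k) = f z" "(\<Sum>k. b k * z ^ k) = g z"
      using a(2) b(2) z sums_unique by metis+
    moreover have "(\<lambda>k. \<Sum>i\<le>k. (a i * z ^ i) * (b (k - i) * z ^ (k - i))) = (\<lambda>k. (\<Sum>i\<le>k. a i * b (k - i)) * z ^ k)"
    proof
      fix k
      have "(\<Sum>i\<le>k. (a i * z ^ i) * (b (k - i) * z ^ (k - i))) = (\<Sum>i\<le>k. (a i * b (k - i)) * z ^ k)"
        by (intro sum.cong refl) (simp add: power_add[symmetric] mult_ac)
      then show "(\<Sum>i\<le>k. (a i * z ^ i) * (b (k - i) * z ^ (k - i))) = (\<Sum>i\<le>k. a i * b (k - i)) * z ^ k"
        by (simp add: sum_distrib_right)
    qed
    ultimately show "(\<lambda>k. (\<Sum>i\<le>k. a i * b (k - i)) * z ^ k) sums (f z * g z)" by simp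
  qed
qed

lemma good_id: "good (\<lambda>z. z)"
  unfolding good_def
proof (intro exI[of _ "\<lambda>k. if k = 1 then 1 else 0"] conjI allI impI)
  show "summable (\<lambda>k. norm (if k = 1 then 1 else (0::complex)))"
    by (rule summable_finite[of "{1}"]) auto
  fix z :: complex
  have "(\<lambda>k. (if k = 1 then 1 else 0) * z ^ k) = (\<lambda>k. if k = 1 then z else 0)" by auto
  then show "(\<lambda>k. (if k = 1 then 1 else 0) * z ^ k) sums z"
    using sums_single[of 1 "\<lambda>_. z"] by simp
qed

lemma good_inv_lin:
  assumes r: "cmod r > 1"
  shows "good (\<lambda>z. 1 / (z - r))"
  unfolding good_def
proof (intro exI[of _ "\<lambda>k. - ((1 / r) ^ Suc k)"] conjI allI impI)
  have "norm (1 / r) < 1" using r by (simp add: norm_divide divide_less_eq)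
  then have "summable (\<lambda>k. norm (1 / r) ^ k)"
    by (intro summable_geometric) simp
  then have "summable (\<lambda>k. norm (1 / r) ^ Suc k)"
    by (subst summable_Suc_iff)
  then show "summable (\<lambda>k. norm (- ((1 / r) ^ Suc k)))"
    by (simp add: norm_power norm_mult del: power_Suc)
  fix z :: complex assume z: "cmod z \<le> 1"
  have r0: "r \<noteq> 0" using r by auto
  have "norm (z / r) < 1" using z r by (simp add: norm_divide divide_less_eq)
  then have "(\<lambda>k. (z / r) ^ k) sums (1 / (1 - z / r))" by (rule geometric_sums)
  then have "(\<lambda>k. (- (1 / r)) * (z / r) ^ k) sums (- (1 / r) * (1 / (1 - z / r)))"
    by (rule sums_mult)
  moreover have "- (1 / r) * (1 / (1 - z / r)) = 1 / (z - r)"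
  proof -
    have "z - r \<noteq> 0" using z r by auto
    then show ?thesis using r0 by (simp add: field_simps)
  qed
  moreover have "(\<lambda>k. (- (1 / r)) * (z / r) ^ k) = (\<lambda>k. - ((1 / r) ^ Suc k) * z ^ k)"
    by (auto simp: power_divide field_simps)
  ultimately show "(\<lambda>k. - ((1 / r) ^ Suc k) * z ^ k) sums (1 / (z - r))" by simp
qed

lemma good_poly: "good (poly p)"
proof (induction p)
  case 0
  then show ?case using good_const[of 0] by (simp add: fun_eq_iff)
next
  case (pCons a p)
  have "good (\<lambda>z. a + z * poly p z)"
    by (intro good_add good_const good_mult good_id pCons.IH)
  then show ?case by (simp add: fun_eq_iff)
qed

lemma good_inv_poly:
  fixes q :: "complex poly"
  assumes "\<forall>z. cmod z \<le> 1 \<longrightarrow> poly q z \<noteq> 0"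
  shows "good (\<lambda>z. 1 / poly q z)"
  using assms
proof (induction "degree q" arbitrary: q rule: less_induct)
  case less
  show ?case
  proof (cases "degree q = 0")
    case True
    then obtain c where "q = [:c:]" by (metis degree_eq_zeroE)
    then show ?thesis using good_const[of "1 / c"] by simp
  next
    case False
    then have "\<not> constant (poly q)" by (simp add: constant_degree)
    then obtain r where r: "poly q r = 0" using fundamental_theorem_of_algebra by blast
    then have r1: "cmod r > 1" using less.prems by force
    from r obtain q' where q: "q = [:-r, 1:] * q'" by (metis poly_eq_0_iff_dvd dvdE)
    have q'0: "q' \<noteq> 0" using q False by auto
    have deg: "degree q' < degree q" using q'0 by (subst q, subst degree_mult_eq) auto
    have pq: "\<And>z. poly q z = (z - r) * poly q' z" by (subst q) (simp add: algebra_simps)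
    have "\<forall>z. cmod z \<le> 1 \<longrightarrow> poly q' z \<noteq> 0" using less.prems pq by auto
    then have "good (\<lambda>z. 1 / poly q' z)" using less.hyps deg by blast
    then have "good (\<lambda>z. 1 / (z - r) * (1 / poly q' z))"
      by (intro good_mult good_inv_lin r1)
    then show ?thesis by (simp add: pq)
  qed
qed

lemma good_ratio:
  fixes q :: "complex poly"
  assumes "\<forall>z. cmod z \<le> 1 \<longrightarrow> poly q z \<noteq> 0"
  shows "good (\<lambda>z. poly p z / poly q z)"
  using good_mult[OF good_poly good_inv_poly[OF assms], of p] by simp


definition ci :: "(real \<Rightarrow> complex) \<Rightarrow> complex" where
  "ci f = integral\<^sup>L lborel (\<lambda>s. indicator {0..2*pi} s *\<^sub>R f s)"

lemma ci_integrable_bound: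
  fixes f :: "real \<Rightarrow> complex"
  assumes "f \<in> borel_measurable borel" "\<And>s. norm (f s) \<le> B"
  shows "integrable lborel (\<lambda>s. indicator {0..2*pi} s *\<^sub>R f s)"
proof (rule Bochner_Integration.integrable_bound[where f="\<lambda>s. indicator {0..2*pi} s *\<^sub>R (B::real)"])
  show "integrable lborel (\<lambda>s. indicator {0..2*pi} s *\<^sub>R (B::real))"
    by (rule borel_integrable_compact) (auto intro: continuous_intros)
  show "(\<lambda>s. indicator {0..2*pi} s *\<^sub>R f s) \<in> borel_measurable lborel"
    using assms(1) by measurable
  show "AE x in lborel. norm (indicator {0..2 * pi} x *\<^sub>R f x) \<le> norm (indicator {0..2 * pi} x *\<^sub>R B)"
    using assms(2) order_trans[OF norm_ge_zero assms(2)]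
    by (auto simp: indicator_def)
qed

lemma ci_series:
  fixes g :: "nat \<Rightarrow> real \<Rightarrow> complex"
  assumes meas: "\<And>j. g j \<in> borel_measurable borel"
    and sums: "\<And>s. (\<lambda>j. g j s) sums G s"
    and bnd: "\<And>j s. norm (g j s) \<le> M j" and sm: "summable M"
  shows "(\<lambda>j. ci (g j)) sums ci G"
proof -
  have M0: "\<And>j. 0 \<le> M j" using bnd order_trans[OF norm_ge_zero] by blast
  have Gm: "G \<in> borel_measurable borel"
    by (rule borel_measurable_LIMSEQ_metric[of "\<lambda>N s. \<Sum>j<N. g j s"])
       (use meas sums in \<open>auto simp: sums_def\<close>)
  have int: "\<And>j. integrable lborel (\<lambda>s. indicator {0..2*pi} s *\<^sub>R g j s)"
    by (rule ci_integrable_bound[OF meas bnd])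
  have eq: "(\<Sum>j<N. ci (g j)) = integral\<^sup>L lborel (\<lambda>s. indicator {0..2*pi} s *\<^sub>R (\<Sum>j<N. g j s))" for N
    unfolding ci_def scaleR_sum_right
    by (rule Bochner_Integration.integral_sum[symmetric]) (use int in auto)
  have "(\<lambda>N. integral\<^sup>L lborel (\<lambda>s. indicator {0..2*pi} s *\<^sub>R (\<Sum>j<N. g j s))) \<longlonglongrightarrow> ci G"
    unfolding ci_def
  proof (rule integral_dominated_convergence[where w="\<lambda>s. indicator {0..2*pi} s *\<^sub>R suminf M"])
    show "(\<lambda>s. indicator {0..2*pi} s *\<^sub>R G s) \<in> borel_measurable lborel" using Gm by measurable
    show "(\<lambda>s. indicator {0..2*pi} s *\<^sub>R (\<Sum>j<N. g j s)) \<in> borel_measurable lborel" for N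
      using meas by measurable
    show "integrable lborel (\<lambda>s. indicator {0..2*pi} s *\<^sub>R suminf M)"
      by (rule borel_integrable_compact) (auto intro: continuous_intros)
    show "AE s in lborel. (\<lambda>N. indicator {0..2*pi} s *\<^sub>R (\<Sum>j<N. g j s)) \<longlonglongrightarrow> indicator {0..2*pi} s *\<^sub>R G s"
      using sums by (auto simp: sums_def intro!: tendsto_scaleR)
    show "AE s in lborel. norm (indicator {0..2*pi} s *\<^sub>R (\<Sum>j<N. g j s)) \<le> indicator {0..2*pi} s *\<^sub>R suminf M" for N
    proof (intro AE_I2)
      fix s
      have "norm (\<Sum>j<N. g j s) \<le> (\<Sum>j<N. M j)"
        by (rule order_trans[OF norm_sum sum_mono[OF bnd]])
      also have "\<dots> \<le> suminf M" by (rule sum_le_suminf[OF sm]) (use M0 in auto)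
      finally show "norm (indicator {0..2*pi} s *\<^sub>R (\<Sum>j<N. g j s)) \<le> indicator {0..2*pi} s *\<^sub>R suminf M"
        by (auto simp: indicator_def)
    qed
  qed
  then show ?thesis unfolding sums_def eq .
qed

lemma ci_ortho:
  fixes d :: int
  shows "ci (\<lambda>s. cis (of_int d * s)) = (if d = 0 then 2 * pi else 0)"
proof (cases "d = 0")
  case True
  have "ci (\<lambda>s. cis (of_int d * s)) = complex_of_real (2 * pi) - complex_of_real 0"
    unfolding ci_def using True
    by (intro integral_FTC_atLeastAtMost) (auto intro!: derivative_eq_intros continuous_intros)
  then show ?thesis using True by simp
next
  case False
  define c where "c = 1 / (\<i> * of_int d)"
  have "ci (\<lambda>s. cis (of_int d * s)) = cis (of_int d * (2*pi)) * c - cis (of_int d * 0) * c"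
    unfolding ci_def
  proof (rule integral_FTC_atLeastAtMost)
    show "0 \<le> 2 * pi" by simp
    show "continuous_on {0..2 * pi} (\<lambda>s. cis (of_int d * s))" by (intro continuous_intros)
    fix x :: real
    have "((\<lambda>s. cis (of_int d * s) * c) has_derivative (\<lambda>t. (t * of_int d) *\<^sub>R (\<i> * cis (of_int d * x)) * c)) (at x within {0..2*pi})"
      by (intro derivative_eq_intros has_derivative_cis) auto
    moreover have "(\<lambda>t. (t * of_int d) *\<^sub>R (\<i> * cis (of_int d * x)) * c) = (\<lambda>t. t *\<^sub>R cis (of_int d * x))"
      using False by (auto simp: c_def fun_eq_iff scaleR_conv_of_real field_simps)
    ultimately show "((\<lambda>s. cis (of_int d * s) * c) has_vector_derivative cis (of_int d * x)) (at x within {0..2 * pi})"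
      unfolding has_vector_derivative_def by simp
  qed
  also have "cis (of_int d * (2*pi)) = 1"
    using cis_multiple_2pi[of "of_int d"] by (simp add: mult_ac)
  finally show ?thesis using False by simp
qed

lemma ci_cmult: "ci (\<lambda>s. c * f s) = c * ci f"
proof -
  have "(\<lambda>s. indicator {0..2*pi} s *\<^sub>R (c * f s)) = (\<lambda>s. c * (indicator {0..2*pi} s *\<^sub>R f s))"
    by (simp add: fun_eq_iff)
  then show ?thesis unfolding ci_def by (simp only: integral_mult_right_zero)
qed

lemma good_ci:
  fixes h :: "complex \<Rightarrow> complex"
  assumes "good h" "cmod a < 1"
  shows "ci (\<lambda>s. h (cis s) / (1 - cnj (cis s) * a)) = 2 * pi * h a"
proof -
  obtain b where bs: "summable (\<lambda>k. norm (b k))"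
    and hs: "\<And>z. cmod z \<le> 1 \<Longrightarrow> (\<lambda>k. b k * z ^ k) sums h z"
    using assms(1) unfolding good_def by blast
  define H where "H = (\<Sum>k. norm (b k))"
  have hb: "norm (h z) \<le> H" if z: "cmod z \<le> 1" for z
  proof -
    have sz: "summable (\<lambda>k. norm (b k * z ^ k))"
      by (rule summable_comparison_test[OF _ bs]) (auto intro!: exI[of _ 0] norm_pow_le z)
    have "h z = (\<Sum>k. b k * z ^ k)" using hs[OF z] sums_unique by metis
    then have "norm (h z) \<le> (\<Sum>k. norm (b k * z ^ k))" using summable_norm[OF sz] by simp
    also have "\<dots> \<le> H" unfolding H_def
      by (rule suminf_le[OF _ sz bs]) (use norm_pow_le[OF z] in auto)
    finally show ?thesis .
  qed
  have cis1: "cmod (cis s) \<le> 1" for s by simp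
  have hmeas: "(\<lambda>s. h (cis s)) \<in> borel_measurable borel"
    by (rule borel_measurable_LIMSEQ_metric[of "\<lambda>N s. \<Sum>k<N. b k * cis s ^ k"])
       (auto intro!: borel_measurable_continuous_onI continuous_intros simp: sums_def[symmetric] hs)
  have coef: "ci (\<lambda>s. h (cis s) * cnj (cis s) ^ k) = 2 * pi * b k" for k
  proof -
    have "(\<lambda>j. ci (\<lambda>s. b j * cis s ^ j * cnj (cis s) ^ k)) sums ci (\<lambda>s. h (cis s) * cnj (cis s) ^ k)"
    proof (rule ci_series[where M="\<lambda>j. norm (b j)"])
      show "(\<lambda>s. b j * cis s ^ j * cnj (cis s) ^ k) \<in> borel_measurable borel" for j
        by (auto intro!: borel_measurable_continuous_onI continuous_intros)
      show "(\<lambda>j. b j * cis s ^ j * cnj (cis s) ^ k) sums (h (cis s) * cnj (cis s) ^ k)" for s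
        by (rule sums_mult2[OF hs[OF cis1]])
      show "norm (b j * cis s ^ j * cnj (cis s) ^ k) \<le> norm (b j)" for j s
        by (simp add: norm_mult norm_power)
    qed (rule bs)
    moreover have "ci (\<lambda>s. b j * cis s ^ j * cnj (cis s) ^ k) = (if j = k then 2 * pi * b k else 0)" for j
    proof -
      have "(\<lambda>s. b j * cis s ^ j * cnj (cis s) ^ k) = (\<lambda>s. b j * cis (of_int (int j - int k) * s))"
      proof
        fix x
        have e1: "cis x ^ j = cis (real j * x)" by (rule Complex.DeMoivre)
        have e2: "cnj (cis x) ^ k = cis (real k * (-x))" unfolding cis_cnj by (rule Complex.DeMoivre)
        have "cis x ^ j * cnj (cis x) ^ k = cis (of_int (int j - int k) * x)"
          unfolding e1 e2 cis_mult by (simp add: algebra_simps)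
        then show "b j * cis x ^ j * cnj (cis x) ^ k = b j * cis (of_int (int j - int k) * x)"
          by (simp add: mult.assoc)
      qed
      moreover have o: "ci (\<lambda>s. cis (of_int (int j - int k) * s)) = (if j = k then 2*pi else 0)"
        using ci_ortho[of "int j - int k"] by simp
      ultimately show ?thesis by (simp only: ci_cmult o) auto
    qed
    ultimately have "(\<lambda>j. if j = k then 2 * pi * b k else 0) sums ci (\<lambda>s. h (cis s) * cnj (cis s) ^ k)"
      by simp
    moreover have "(\<lambda>j. if j = k then 2 * pi * b k else 0) sums (2 * pi * b k)"
      by (rule sums_single)
    ultimately show ?thesis using sums_unique2 by blast
  qed
  have "(\<lambda>k. ci (\<lambda>s. a ^ k * (h (cis s) * cnj (cis s) ^ k))) sums ci (\<lambda>s. h (cis s) / (1 - cnj (cis s) * a))"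
  proof (rule ci_series[where M="\<lambda>k. H * norm a ^ k"])
    show "(\<lambda>s. a ^ k * (h (cis s) * cnj (cis s) ^ k)) \<in> borel_measurable borel" for k
    proof -
      have cm: "(\<lambda>s. a ^ k * cnj (cis s) ^ k) \<in> borel_measurable borel"
        by (auto intro!: borel_measurable_continuous_onI continuous_intros)
      show ?thesis using borel_measurable_times[OF hmeas cm] by (simp add: mult_ac)
    qed
    show "(\<lambda>k. a ^ k * (h (cis s) * cnj (cis s) ^ k)) sums (h (cis s) / (1 - cnj (cis s) * a))" for s
    proof -
      have "norm (cnj (cis s) * a) < 1" using assms(2) by (simp add: norm_mult)
      then have "(\<lambda>k. (cnj (cis s) * a) ^ k) sums (1 / (1 - cnj (cis s) * a))" by (rule geometric_sums)
      then have "(\<lambda>k. h (cis s) * (cnj (cis s) * a) ^ k) sums (h (cis s) * (1 / (1 - cnj (cis s) * a)))"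
        by (rule sums_mult)
      then show ?thesis by (simp add: power_mult_distrib mult_ac)
    qed
    show "norm (a ^ k * (h (cis s) * cnj (cis s) ^ k)) \<le> H * norm a ^ k" for k s
      using hb[OF cis1, of s] by (simp add: norm_mult norm_power mult.commute[of H] mult_left_mono)
    show "summable (\<lambda>k. H * norm a ^ k)"
      by (intro summable_mult summable_geometric) (use assms(2) in simp)
  qed
  moreover have "ci (\<lambda>s. a ^ k * (h (cis s) * cnj (cis s) ^ k)) = 2 * pi * (b k * a ^ k)" for k
    by (simp add: ci_cmult coef)
  ultimately have "(\<lambda>k. 2 * pi * (b k * a ^ k)) sums ci (\<lambda>s. h (cis s) / (1 - cnj (cis s) * a))"
    by simp
  moreover have "(\<lambda>k. 2 * pi * (b k * a ^ k)) sums (2 * pi * h a)"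
    by (rule sums_mult[OF hs]) (use assms(2) in simp)
  ultimately show ?thesis using sums_unique2 by blast
qed

lemma good_mean:
  fixes h :: "complex \<Rightarrow> complex"
  shows "good h \<Longrightarrow> ci (\<lambda>s. h (cis s)) = 2 * pi * h 0"
  using good_ci[of h 0] by simp


abbreviation SQ :: "(real \<times> real) set" where "SQ \<equiv> {0..2*pi} \<times> {0..2*pi}"

lemma emeasure_SQ: "emeasure lborel SQ = ennreal (4 * pi^2)"
proof -
  have "emeasure (lborel \<Otimes>\<^sub>M lborel) SQ = emeasure lborel {0..2*pi::real} * emeasure lborel {0..2*pi::real}"
    by (rule lborel.emeasure_pair_measure_Times) auto
  also have "\<dots> = ennreal (4 * pi^2)"
    by (simp add: ennreal_mult[symmetric] power2_eq_square)
  finally show ?thesis by (simp add: lborel_prod)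
qed

lemma unif_eq: "uniform_measure lborel SQ = density lborel (\<lambda>x. ennreal (indicator SQ x / (4*pi^2)))"
  unfolding uniform_measure_def emeasure_SQ
proof (intro arg_cong[where f="density lborel"] ext)
  fix x :: "real \<times> real"
  show "indicator SQ x / ennreal (4 * pi^2) = ennreal (indicator SQ x / (4 * pi^2))"
    by (cases "x \<in> SQ") (auto simp: divide_ennreal[symmetric])
qed

lemma phi_meas: "(\<lambda>(s, t). (cis s, cis t)) \<in> measurable (uniform_measure lborel SQ) borel"
proof -
  have "(\<lambda>(s, t). (cis s, cis t)) \<in> borel_measurable (borel :: (real \<times> real) measure)"
    by (rule borel_measurable_continuous_onI) (auto intro!: continuous_intros simp: case_prod_unfold)
  then show ?thesis by (simp add: measurable_cong_sets[OF sets_uniform_measure refl])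
qed

lemma torus_int:
  fixes g :: "complex \<times> complex \<Rightarrow> complex"
  assumes gm: "g \<in> borel_measurable borel"
    and gc: "continuous_on UNIV (\<lambda>x. g (cis (fst x), cis (snd x)))"
  shows "integrable torus_measure g"
    and "integral\<^sup>L torus_measure g = ci (\<lambda>s. ci (\<lambda>t. g (cis s, cis t))) / (4 * pi^2)"
    and "integral\<^sup>L torus_measure g = ci (\<lambda>t. ci (\<lambda>s. g (cis s, cis t))) / (4 * pi^2)"
proof -
  let ?F = "\<lambda>x::real\<times>real. indicator SQ x *\<^sub>R g (cis (fst x), cis (snd x))"
  have intF: "integrable lborel ?F"
    by (rule borel_integrable_compact) (auto intro!: compact_Times continuous_on_subset[OF gc])
  have c0: "(4 * pi^2 :: real) > 0" by simp
  have meas2: "(\<lambda>x::real\<times>real. g (cis (fst x), cis (snd x))) \<in> borel_measurable borel"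
    using borel_measurable_continuous_onI[OF gc] by simp
  have SQb: "SQ \<in> sets borel" by (intro borel_closed closed_Times closed_atLeastAtMost)
  have ind: "(\<lambda>x. indicator SQ x / (4*pi^2)) \<in> borel_measurable borel"
    using SQb by measurable
  have eq1: "integral\<^sup>L torus_measure g = integral\<^sup>L lborel ?F / (4 * pi^2)"
  proof -
    have "integral\<^sup>L torus_measure g = integral\<^sup>L (uniform_measure lborel SQ) (\<lambda>x. g (case x of (s, t) \<Rightarrow> (cis s, cis t)))"
      unfolding torus_measure_def by (rule integral_distr[OF phi_meas gm])
    also have "\<dots> = integral\<^sup>L lborel (\<lambda>x. (indicator SQ x / (4*pi^2)) *\<^sub>R g (cis (fst x), cis (snd x)))"
      unfolding unif_eq
      by (subst integral_density) (auto simp: case_prod_unfold meas2 ind)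
    also have "\<dots> = integral\<^sup>L lborel (\<lambda>x. (1 / (4*pi^2)) *\<^sub>R ?F x)"
      by (intro arg_cong[where f="integral\<^sup>L lborel"] ext) simp
    also have "\<dots> = integral\<^sup>L lborel ?F / (4 * pi^2)"
      by (simp only: integral_scaleR_right) (simp add: scaleR_conv_of_real)
    finally show ?thesis .
  qed
  show "integrable torus_measure g"
    unfolding torus_measure_def
  proof (subst integrable_distr_eq[OF phi_meas gm])
    show "integrable (uniform_measure lborel SQ) (\<lambda>x. g (case x of (s, t) \<Rightarrow> (cis s, cis t)))"
      unfolding unif_eq
      apply (subst integrable_density)
      using integrable_scaleR_right[OF intF, of "1 / (4*pi^2)"]
      by (auto simp: case_prod_unfold meas2 ind)
  qed
  have intF': "integrable (lborel \<Otimes>\<^sub>M lborel) (\<lambda>(s, t). indicator {0..2*pi} s *\<^sub>R (indicator {0..2*pi} t *\<^sub>R g (cis s, cis t)))"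
    using intF by (simp add: lborel_prod case_prod_unfold indicator_times)
  have "integral\<^sup>L lborel ?F = integral\<^sup>L (lborel \<Otimes>\<^sub>M lborel) (\<lambda>(s, t). indicator {0..2*pi} s *\<^sub>R (indicator {0..2*pi} t *\<^sub>R g (cis s, cis t)))"
    by (simp add: lborel_prod case_prod_unfold indicator_times)
  note I = this
  show "integral\<^sup>L torus_measure g = ci (\<lambda>s. ci (\<lambda>t. g (cis s, cis t))) / (4 * pi^2)"
    unfolding eq1 I lborel_pair.integral_fst[OF intF', symmetric] ci_def by (simp only: integral_scaleR_right)
  show "integral\<^sup>L torus_measure g = ci (\<lambda>t. ci (\<lambda>s. g (cis s, cis t))) / (4 * pi^2)"
    unfolding eq1 I lborel_pair.integral_snd[OF intF', symmetric] ci_def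
    by (simp only: scaleR_left_commute[of "indicator {0..2*pi} _" "indicator {0..2*pi} _"] integral_scaleR_right)
qed


definition rep :: "nat \<Rightarrow> nat \<Rightarrow> (complex \<times> complex \<Rightarrow> complex) \<Rightarrow> bool" where
  "rep n m f \<longleftrightarrow> (\<exists>F a. finite F \<and> F \<subseteq> idx_set n m \<and> (\<forall>x. f x = mono_comb F a x))"

lemma mono_comb_extend:
  assumes "finite G" "F \<subseteq> G"
  shows "mono_comb F a x = mono_comb G (\<lambda>k. if k \<in> F then a k else 0) x"
  unfolding mono_comb_def
  by (rule sum.mono_neutral_cong_left[OF assms]) (auto split: prod.splits)

lemma rep_add: "rep n m f \<Longrightarrow> rep n m g \<Longrightarrow> rep n m (\<lambda>x. f x + g x)"
  unfolding rep_def
proof (elim exE conjE)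
  fix F a G b assume F: "finite F" "F \<subseteq> idx_set n m" "\<forall>x. f x = mono_comb F a x"
    and G: "finite G" "G \<subseteq> idx_set n m" "\<forall>x. g x = mono_comb G b x"
  let ?a = "\<lambda>k. (if k \<in> F then a k else 0) + (if k \<in> G then b k else 0)"
  show "\<exists>F a. finite F \<and> F \<subseteq> idx_set n m \<and> (\<forall>x. f x + g x = mono_comb F a x)"
  proof (intro exI[of _ "F \<union> G"] exI[of _ ?a] conjI allI)
    fix x
    have "f x + g x = mono_comb (F \<union> G) (\<lambda>k. if k \<in> F then a k else 0) x
        + mono_comb (F \<union> G) (\<lambda>k. if k \<in> G then b k else 0) x"
    proof -
      have e1: "mono_comb F a x = mono_comb (F \<union> G) (\<lambda>k. if k \<in> F then a k else 0) x"
        by (rule mono_comb_extend) (use F G in auto)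
      have e2: "mono_comb G b x = mono_comb (F \<union> G) (\<lambda>k. if k \<in> G then b k else 0) x"
        by (rule mono_comb_extend) (use F G in auto)
      show ?thesis by (simp only: F(3)[rule_format] G(3)[rule_format] e1 e2)
    qed
    also have "\<dots> = mono_comb (F \<union> G) ?a x"
      unfolding mono_comb_def sum.distrib[symmetric]
      by (intro sum.cong refl) (auto simp: distrib_right split: prod.splits)
    finally show "f x + g x = mono_comb (F \<union> G) ?a x" .
  qed (use F G in auto)
qed

lemma rep_scale: "rep n m f \<Longrightarrow> rep n m (\<lambda>x. c * f x)"
  unfolding rep_def
proof (elim exE conjE)
  fix F a assume F: "finite F" "F \<subseteq> idx_set n m" "\<forall>x. f x = mono_comb F a x"
  show "\<exists>F a. finite F \<and> F \<subseteq> idx_set n m \<and> (\<forall>x. c * f x = mono_comb F a x)"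
  proof (intro exI[of _ F] exI[of _ "\<lambda>k. c * a k"] conjI allI)
    fix x
    have "f x = mono_comb F a x" using F by blast
    then show "c * f x = mono_comb F (\<lambda>k. c * a k) x"
      unfolding mono_comb_def by (simp add: sum_distrib_left mult_ac split_def)
  qed (use F in auto)
qed

lemma rep_zero: "rep n m (\<lambda>x. 0)"
  unfolding rep_def by (intro exI[of _ "{}"]) (auto simp: mono_comb_def)

lemma rep_diff: "rep n m f \<Longrightarrow> rep n m g \<Longrightarrow> rep n m (\<lambda>x. f x - g x)"
  using rep_add[of n m f "\<lambda>x. (-1) * g x"] rep_scale[of n m g "-1"] by simp

lemma rep_sum: "finite A \<Longrightarrow> (\<And>k. k \<in> A \<Longrightarrow> rep n m (f k)) \<Longrightarrow> rep n m (\<lambda>x. \<Sum>k\<in>A. f k x)"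
  by (induction A rule: finite_induct) (auto intro: rep_zero rep_add)

lemma rep_mono: "\<not> (n \<le> i \<and> m \<le> j) \<Longrightarrow> rep n m (\<lambda>x. fst x ^ i * snd x ^ j)"
  unfolding rep_def
  by (intro exI[of _ "{(i, j)}"] exI[of _ "\<lambda>_. 1"]) (auto simp: mono_comb_def idx_set_def)

definition geo :: "nat \<Rightarrow> complex \<Rightarrow> complex" where "geo k x = (\<Sum>t<k. x ^ t)"

lemma geo_eq: "(1 - x) * geo k x = 1 - x ^ k"
  unfolding geo_def by (rule one_diff_power_eq[symmetric])

definition Aterm :: "complex \<Rightarrow> nat \<Rightarrow> nat \<Rightarrow> nat \<Rightarrow> complex \<Rightarrow> complex \<Rightarrow> complex" where
  "Aterm al n a b z w = z ^ a * w ^ b * geo (n - a) (al * z)"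

definition Bterm :: "complex \<Rightarrow> complex \<Rightarrow> nat \<Rightarrow> nat \<Rightarrow> nat \<Rightarrow> nat \<Rightarrow> complex \<Rightarrow> complex \<Rightarrow> complex" where
  "Bterm al be n m a b z w = z ^ n * al ^ (n - a) * w ^ b * geo (m - b) (be * w)"

lemma mono_decomp:
  assumes "a \<le> n" "b \<le> m"
  shows "z ^ a * w ^ b = (1 - al * z) * Aterm al n a b z w + (1 - be * w) * Bterm al be n m a b z w
           + al ^ (n - a) * be ^ (m - b) * z ^ n * w ^ m"
proof -
  have zn: "z ^ n = z ^ a * z ^ (n - a)" using assms by (simp flip: power_add)
  have wm: "w ^ m = w ^ b * w ^ (m - b)" using assms by (simp flip: power_add)
  have "(1 - al * z) * Aterm al n a b z w = z ^ a * w ^ b * (1 - (al * z) ^ (n - a))"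
    unfolding Aterm_def by (simp add: geo_eq[symmetric] mult_ac)
  moreover have "(1 - be * w) * Bterm al be n m a b z w = z ^ n * al ^ (n - a) * w ^ b * (1 - (be * w) ^ (m - b))"
    unfolding Bterm_def by (simp add: geo_eq[symmetric] mult_ac)
  ultimately show ?thesis
    unfolding zn wm power_mult_distrib by (simp add: ring_distribs mult_ac)
qed

lemma sum2: "(c::complex) * (\<Sum>t<A. x ^ t) * (\<Sum>l<B. y ^ l) = (\<Sum>t<A. \<Sum>l<B. c * x ^ t * y ^ l)"
  by (simp only: sum_distrib_left sum_distrib_right mult.assoc) (rule sum.swap)

lemma rep_Aterm: "rep n m (\<lambda>x. Aterm al n a b (fst x) (snd x) * geo L (be * snd x))"
proof -
  have "(\<lambda>x. Aterm al n a b (fst x) (snd x) * geo L (be * snd x))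
      = (\<lambda>x. \<Sum>t<n - a. \<Sum>l<L. (al ^ t * be ^ l) * (fst x ^ (a + t) * snd x ^ (b + l)))"
    unfolding Aterm_def geo_def sum2
    by (intro ext sum.cong refl) (simp add: power_add power_mult_distrib mult_ac)
  moreover have "rep n m (\<lambda>x. \<Sum>t<n - a. \<Sum>l<L. (al ^ t * be ^ l) * (fst x ^ (a + t) * snd x ^ (b + l)))"
    by (intro rep_sum rep_scale rep_mono) auto
  ultimately show ?thesis by simp
qed

lemma rep_Bterm: "rep n m (\<lambda>x. Bterm al be n m a b (fst x) (snd x) * geo L (al * fst x))"
proof -
  have "(\<lambda>x. Bterm al be n m a b (fst x) (snd x) * geo L (al * fst x))
      = (\<lambda>x. \<Sum>u<m - b. \<Sum>t<L. (al ^ (n - a) * be ^ u * al ^ t) * (fst x ^ (n + t) * snd x ^ (b + u)))"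
    unfolding Bterm_def geo_def sum2
    by (intro ext sum.cong refl) (simp add: power_add power_mult_distrib mult_ac)
  moreover have "rep n m (\<lambda>x. \<Sum>u<m - b. \<Sum>t<L. (al ^ (n - a) * be ^ u * al ^ t) * (fst x ^ (n + t) * snd x ^ (b + u)))"
    by (intro rep_sum rep_scale rep_mono) auto
  ultimately show ?thesis by simp
qed


lemma torus_bound:
  fixes g :: "complex \<times> complex \<Rightarrow> 'b::real_normed_vector"
  assumes "continuous_on UNIV g"
  shows "\<exists>C. \<forall>z w. cmod z = 1 \<longrightarrow> cmod w = 1 \<longrightarrow> norm (g (z, w)) \<le> C"
proof -
  let ?T = "sphere (0::complex) 1 \<times> sphere (0::complex) 1"
  have "compact (g ` ?T)"
    by (intro compact_continuous_image continuous_on_subset[OF assms] compact_Times compact_sphere) auto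
  then obtain b where "\<forall>y\<in>g ` ?T. norm y \<le> b" using compact_imp_bounded bounded_pos by metis
  then show ?thesis by (intro exI[of _ b]) auto
qed

lemma torus_lower:
  fixes g :: "complex \<times> complex \<Rightarrow> 'b::real_normed_vector"
  assumes "continuous_on UNIV g" "\<And>z w. cmod z = 1 \<Longrightarrow> cmod w = 1 \<Longrightarrow> g (z, w) \<noteq> 0"
  shows "\<exists>\<mu>>0. \<forall>z w. cmod z = 1 \<longrightarrow> cmod w = 1 \<longrightarrow> \<mu> \<le> norm (g (z, w))"
proof -
  let ?T = "sphere (0::complex) 1 \<times> sphere (0::complex) 1"
  have "\<exists>x\<in>?T. \<forall>y\<in>?T. norm (g x) \<le> norm (g y)"
    by (intro continuous_attains_inf continuous_on_subset[OF continuous_on_norm[OF assms(1)]]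
        compact_Times compact_sphere) (auto intro!: exI[of _ 1])
  then obtain x where x: "x \<in> ?T" "\<forall>y\<in>?T. norm (g x) \<le> norm (g y)" by blast
  have "g x \<noteq> 0" using x(1) assms(2)[of "fst x" "snd x"] by (cases x) auto
  then show ?thesis using x(2) by (intro exI[of _ "norm (g x)"]) auto
qed

lemma cont_bipoly: "continuous_on UNIV (\<lambda>x. bipoly c n m (fst x) (snd x))"
  unfolding bipoly_def by (intro continuous_intros)

lemma cont_bipoly_refl: "continuous_on UNIV (\<lambda>x. bipoly_refl c n m (fst x) (snd x))"
  unfolding bipoly_refl_def by (intro continuous_intros)

lemma cont_mono_comb: "continuous_on UNIV (\<lambda>x. mono_comb F a x)"
  unfolding mono_comb_def by (intro continuous_intros) (auto split: prod.splits intro!: continuous_intros)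

context
  fixes c :: "nat \<Rightarrow> nat \<Rightarrow> complex" and n m :: nat and z1 w1 :: complex
begin

definition "cP = cnj (bipoly c n m z1 w1)"
definition "cQ = cnj (bipoly_refl c n m z1 w1)"

definition NA :: "complex \<Rightarrow> complex \<Rightarrow> complex" where
  "NA z w = (\<Sum>i\<le>n. \<Sum>j\<le>m. c i j * cP * Aterm (cnj z1) n i j z w
              - cnj (c i j) * cQ * Aterm (cnj z1) n (n - i) (m - j) z w)"

definition NB :: "complex \<Rightarrow> complex \<Rightarrow> complex" where
  "NB z w = (\<Sum>i\<le>n. \<Sum>j\<le>m. c i j * cP * Bterm (cnj z1) (cnj w1) n m i j z w
              - cnj (c i j) * cQ * Bterm (cnj z1) (cnj w1) n m (n - i) (m - j) z w)"

lemma Cterm_zero: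
  "(\<Sum>i\<le>n. \<Sum>j\<le>m. c i j * cP * cnj z1 ^ (n - i) * cnj w1 ^ (m - j)
      - cnj (c i j) * cQ * cnj z1 ^ i * cnj w1 ^ j) = 0"
proof -
  have q: "cQ = (\<Sum>i\<le>n. \<Sum>j\<le>m. c i j * cnj z1 ^ (n - i) * cnj w1 ^ (m - j))"
    unfolding cQ_def bipoly_refl_def by (simp add: cnj_sum)
  have p: "cP = (\<Sum>i\<le>n. \<Sum>j\<le>m. cnj (c i j) * cnj z1 ^ i * cnj w1 ^ j)"
    unfolding cP_def bipoly_def by (simp add: cnj_sum)
  have "(\<Sum>i\<le>n. \<Sum>j\<le>m. c i j * cP * cnj z1 ^ (n - i) * cnj w1 ^ (m - j)
      - cnj (c i j) * cQ * cnj z1 ^ i * cnj w1 ^ j)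
      = cP * (\<Sum>i\<le>n. \<Sum>j\<le>m. c i j * cnj z1 ^ (n - i) * cnj w1 ^ (m - j))
        - cQ * (\<Sum>i\<le>n. \<Sum>j\<le>m. cnj (c i j) * cnj z1 ^ i * cnj w1 ^ j)"
    by (simp add: sum_subtractf sum_distrib_left mult_ac)
  also have "\<dots> = 0" by (simp flip: p q)
  finally show ?thesis .
qed

lemma N_decomp:
  "bipoly c n m z w * cP - bipoly_refl c n m z w * cQ
     = (1 - cnj z1 * z) * NA z w + (1 - cnj w1 * w) * NB z w"
proof -
  let ?al = "cnj z1" and ?be = "cnj w1"
  have tm: "c i j * cP * (z ^ i * w ^ j) - cnj (c i j) * cQ * (z ^ (n - i) * w ^ (m - j))
     = (1 - ?al * z) * (c i j * cP * Aterm ?al n i j z w - cnj (c i j) * cQ * Aterm ?al n (n - i) (m - j) z w)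
     + (1 - ?be * w) * (c i j * cP * Bterm ?al ?be n m i j z w - cnj (c i j) * cQ * Bterm ?al ?be n m (n - i) (m - j) z w)
     + (c i j * cP * ?al ^ (n - i) * ?be ^ (m - j) - cnj (c i j) * cQ * ?al ^ i * ?be ^ j) * (z ^ n * w ^ m)"
    if "i \<le> n" "j \<le> m" for i j
  proof -
    have d1: "n - (n - i) = i" "m - (m - j) = j" using that by auto
    note e1 = mono_decomp[of i n j m z w ?al ?be, OF that]
    have e2: "z ^ (n - i) * w ^ (m - j) = (1 - ?al * z) * Aterm ?al n (n - i) (m - j) z w
       + (1 - ?be * w) * Bterm ?al ?be n m (n - i) (m - j) z w + ?al ^ i * ?be ^ j * z ^ n * w ^ m"
      using mono_decomp[of "n - i" n "m - j" m z w ?al ?be] unfolding d1 by simp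
    show ?thesis unfolding e1 e2 by (simp add: algebra_simps)
  qed
  have "bipoly c n m z w * cP - bipoly_refl c n m z w * cQ
      = (\<Sum>i\<le>n. \<Sum>j\<le>m. c i j * cP * (z ^ i * w ^ j) - cnj (c i j) * cQ * (z ^ (n - i) * w ^ (m - j)))"
    unfolding bipoly_def bipoly_refl_def
    by (simp add: sum_subtractf sum_distrib_right sum_distrib_left mult_ac)
  also have "\<dots> = (\<Sum>i\<le>n. \<Sum>j\<le>m.
       (1 - ?al * z) * (c i j * cP * Aterm ?al n i j z w - cnj (c i j) * cQ * Aterm ?al n (n - i) (m - j) z w)
     + (1 - ?be * w) * (c i j * cP * Bterm ?al ?be n m i j z w - cnj (c i j) * cQ * Bterm ?al ?be n m (n - i) (m - j) z w)
     + (c i j * cP * ?al ^ (n - i) * ?be ^ (m - j) - cnj (c i j) * cQ * ?al ^ i * ?be ^ j) * (z ^ n * w ^ m))"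
    by (intro sum.cong refl tm) auto
  also have "\<dots> = (1 - ?al * z) * NA z w + (1 - ?be * w) * NB z w
     + (\<Sum>i\<le>n. \<Sum>j\<le>m. c i j * cP * ?al ^ (n - i) * ?be ^ (m - j) - cnj (c i j) * cQ * ?al ^ i * ?be ^ j) * (z ^ n * w ^ m)"
    unfolding NA_def NB_def
    by (simp only: sum.distrib sum_distrib_left sum_distrib_right)
  also have "\<dots> = (1 - ?al * z) * NA z w + (1 - ?be * w) * NB z w"
    by (simp only: Cterm_zero) simp
  finally show ?thesis .
qed

lemma cont_NA: "continuous_on UNIV (\<lambda>x. NA (fst x) (snd x))"
  unfolding NA_def Aterm_def geo_def by (intro continuous_intros)

lemma cont_NB: "continuous_on UNIV (\<lambda>x. NB (fst x) (snd x))"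
  unfolding NB_def Bterm_def geo_def by (intro continuous_intros)

lemma rep_NA: "rep n m (\<lambda>x. NA (fst x) (snd x) * geo L (cnj w1 * snd x))"
proof -
  have "(\<lambda>x. NA (fst x) (snd x) * geo L (cnj w1 * snd x)) = (\<lambda>x. \<Sum>i\<le>n. \<Sum>j\<le>m.
      (c i j * cP) * (Aterm (cnj z1) n i j (fst x) (snd x) * geo L (cnj w1 * snd x))
      - (cnj (c i j) * cQ) * (Aterm (cnj z1) n (n - i) (m - j) (fst x) (snd x) * geo L (cnj w1 * snd x)))"
    unfolding NA_def by (simp only: sum_distrib_right left_diff_distrib mult.assoc)
  moreover have "rep n m (\<lambda>x. \<Sum>i\<le>n. \<Sum>j\<le>m.
      (c i j * cP) * (Aterm (cnj z1) n i j (fst x) (snd x) * geo L (cnj w1 * snd x))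
      - (cnj (c i j) * cQ) * (Aterm (cnj z1) n (n - i) (m - j) (fst x) (snd x) * geo L (cnj w1 * snd x)))"
    by (intro rep_sum rep_diff rep_scale rep_Aterm) auto
  ultimately show ?thesis by simp
qed

lemma rep_NB: "rep n m (\<lambda>x. NB (fst x) (snd x) * geo L (cnj z1 * fst x))"
proof -
  have "(\<lambda>x. NB (fst x) (snd x) * geo L (cnj z1 * fst x)) = (\<lambda>x. \<Sum>i\<le>n. \<Sum>j\<le>m.
      (c i j * cP) * (Bterm (cnj z1) (cnj w1) n m i j (fst x) (snd x) * geo L (cnj z1 * fst x))
      - (cnj (c i j) * cQ) * (Bterm (cnj z1) (cnj w1) n m (n - i) (m - j) (fst x) (snd x) * geo L (cnj z1 * fst x)))"
    unfolding NB_def by (simp only: sum_distrib_right left_diff_distrib mult.assoc)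
  moreover have "rep n m (\<lambda>x. \<Sum>i\<le>n. \<Sum>j\<le>m.
      (c i j * cP) * (Bterm (cnj z1) (cnj w1) n m i j (fst x) (snd x) * geo L (cnj z1 * fst x))
      - (cnj (c i j) * cQ) * (Bterm (cnj z1) (cnj w1) n m (n - i) (m - j) (fst x) (snd x) * geo L (cnj z1 * fst x)))"
    by (intro rep_sum rep_diff rep_scale rep_Bterm) auto
  ultimately show ?thesis by simp
qed

lemma geo_err: "x \<noteq> 1 \<Longrightarrow> 1 / (1 - x) - geo L x = x ^ L / (1 - x)"
proof -
  assume x: "x \<noteq> 1"
  then have "geo L x = (1 - x ^ L) / (1 - x)" using geo_eq[of x L] by (simp add: field_simps)
  then show ?thesis using x by (simp add: field_simps)
qed

lemma err_bound:
  fixes N D x :: complex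
  assumes "norm N \<le> C" "norm x = r" "r < 1" "norm D \<ge> 1 - r"
  shows "norm (N * x ^ L / D) \<le> C * r ^ L / (1 - r)"
proof -
  have r0: "0 \<le> r" using assms(2) by auto
  have "norm (N * x ^ L / D) = norm N * r ^ L / norm D" using assms(2) by (simp add: norm_mult norm_divide norm_power)
  also have "\<dots> \<le> C * r ^ L / (1 - r)"
    by (rule frac_le) (use assms r0 in \<open>auto intro!: mult_mono mult_nonneg_nonneg order_trans[OF norm_ge_zero assms(1)]\<close>)
  finally show ?thesis .
qed

lemma norm_one_minus: "norm (x::complex) = r \<Longrightarrow> norm (1 - x) \<ge> 1 - r"
  using norm_triangle_ineq2[of 1 x] by simp

lemma approx_K:
  assumes z1: "cmod z1 < 1" and w1: "cmod w1 < 1" and eta: "\<eta> > 0"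
  shows "\<exists>f. rep n m f \<and> (\<forall>z w. cmod z = 1 \<longrightarrow> cmod w = 1 \<longrightarrow>
     cmod ((bipoly c n m z w * cnj (bipoly c n m z1 w1) - bipoly_refl c n m z w * cnj (bipoly_refl c n m z1 w1))
            / ((1 - z * cnj z1) * (1 - w * cnj w1)) - f (z, w)) \<le> \<eta>)"
proof -
  obtain CA where CA: "\<And>z w. cmod z = 1 \<Longrightarrow> cmod w = 1 \<Longrightarrow> norm (NA z w) \<le> CA"
    using torus_bound[OF cont_NA] by auto
  obtain CB where CB: "\<And>z w. cmod z = 1 \<Longrightarrow> cmod w = 1 \<Longrightarrow> norm (NB z w) \<le> CB"
    using torus_bound[OF cont_NB] by auto
  define rz where "rz = cmod z1"
  define rw where "rw = cmod w1"
  have rz: "rz < 1" "0 \<le> rz" using z1 by (auto simp: rz_def)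
  have rw: "rw < 1" "0 \<le> rw" using w1 by (auto simp: rw_def)
  have lim: "(\<lambda>L. CA * rw ^ L / (1 - rw) + CB * rz ^ L / (1 - rz)) \<longlonglongrightarrow> CA * 0 / (1 - rw) + CB * 0 / (1 - rz)"
    using rz rw by (intro tendsto_intros LIMSEQ_power_zero) auto
  then have "eventually (\<lambda>L. CA * rw ^ L / (1 - rw) + CB * rz ^ L / (1 - rz) < \<eta>) sequentially"
    using eta by (intro order_tendstoD(2)) auto
  then obtain L where L: "CA * rw ^ L / (1 - rw) + CB * rz ^ L / (1 - rz) < \<eta>"
    by (auto simp: eventually_sequentially)
  define f where "f = (\<lambda>x. NA (fst x) (snd x) * geo L (cnj w1 * snd x) + NB (fst x) (snd x) * geo L (cnj z1 * fst x))"
  have "rep n m f" unfolding f_def by (intro rep_add rep_NA rep_NB)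
  moreover have "cmod ((bipoly c n m z w * cnj (bipoly c n m z1 w1) - bipoly_refl c n m z w * cnj (bipoly_refl c n m z1 w1))
            / ((1 - z * cnj z1) * (1 - w * cnj w1)) - f (z, w)) \<le> \<eta>"
    if z: "cmod z = 1" and w: "cmod w = 1" for z w
  proof -
    have nz: "norm (cnj z1 * z) = rz" using z by (simp add: norm_mult rz_def)
    have nw: "norm (cnj w1 * w) = rw" using w by (simp add: norm_mult rw_def)
    have Dz: "1 - cnj z1 * z \<noteq> 0" using nz rz by auto
    have Dw: "1 - cnj w1 * w \<noteq> 0" using nw rw by auto
    have Kq: "(bipoly c n m z w * cnj (bipoly c n m z1 w1) - bipoly_refl c n m z w * cnj (bipoly_refl c n m z1 w1))
            / ((1 - z * cnj z1) * (1 - w * cnj w1)) = NA z w * (1 / (1 - cnj w1 * w)) + NB z w * (1 / (1 - cnj z1 * z))"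
      using N_decomp[of z w] Dz Dw unfolding cP_def cQ_def by (simp add: field_simps)
    have "(bipoly c n m z w * cnj (bipoly c n m z1 w1) - bipoly_refl c n m z w * cnj (bipoly_refl c n m z1 w1))
            / ((1 - z * cnj z1) * (1 - w * cnj w1)) - f (z, w)
        = NA z w * (1 / (1 - cnj w1 * w) - geo L (cnj w1 * w)) + NB z w * (1 / (1 - cnj z1 * z) - geo L (cnj z1 * z))"
      unfolding Kq f_def by (simp add: algebra_simps)
    also have "\<dots> = NA z w * (cnj w1 * w) ^ L / (1 - cnj w1 * w) + NB z w * (cnj z1 * z) ^ L / (1 - cnj z1 * z)"
      using Dz Dw by (simp add: geo_err)
    finally have eq: "(bipoly c n m z w * cnj (bipoly c n m z1 w1) - bipoly_refl c n m z w * cnj (bipoly_refl c n m z1 w1))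
            / ((1 - z * cnj z1) * (1 - w * cnj w1)) - f (z, w)
        = NA z w * (cnj w1 * w) ^ L / (1 - cnj w1 * w) + NB z w * (cnj z1 * z) ^ L / (1 - cnj z1 * z)" .
    have "cmod (NA z w * (cnj w1 * w) ^ L / (1 - cnj w1 * w) + NB z w * (cnj z1 * z) ^ L / (1 - cnj z1 * z))
        \<le> CA * rw ^ L / (1 - rw) + CB * rz ^ L / (1 - rz)"
      by (rule order_trans[OF norm_triangle_ineq add_mono])
         (intro err_bound CA CB z w nz nw rz rw norm_one_minus)+
    then show ?thesis unfolding eq using L by simp
  qed
  ultimately show ?thesis by blast
qed

end


lemma unif_space: "emeasure (uniform_measure lborel SQ) (space (uniform_measure lborel SQ)) = 1"
proof -
  have SQb: "SQ \<in> sets lborel" by (simp add: borel_closed closed_Times)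
  have "emeasure (uniform_measure lborel SQ) UNIV = emeasure lborel (SQ \<inter> UNIV) / emeasure lborel SQ"
    by (rule emeasure_uniform_measure) (use SQb in auto)
  also have "\<dots> = 1" by (simp add: emeasure_SQ)
  finally show ?thesis by simp
qed

lemma meas_pair: "continuous_on UNIV g \<Longrightarrow> g \<in> borel_measurable borel"
  by (rule borel_measurable_continuous_onI)

context
  fixes c :: "nat \<Rightarrow> nat \<Rightarrow> complex" and n m :: nat and z1 w1 :: complex
begin

lemma part1:
  assumes stab: "stable2 (bipoly c n m)" and z1: "cmod z1 < 1" and w1: "cmod w1 < 1"
    and K: "K = (\<lambda>x. (bipoly c n m (fst x) (snd x) * cnj (bipoly c n m z1 w1)
                   - bipoly_refl c n m (fst x) (snd x) * cnj (bipoly_refl c n m z1 w1))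
                  / ((1 - fst x * cnj z1) * (1 - snd x * cnj w1)))"
  shows "\<forall>\<epsilon>>0. \<exists>F a. finite F \<and> F \<subseteq> idx_set n m \<and>
            (\<integral>\<^sup>+ x. ennreal ((cmod (K x - mono_comb F a x))\<^sup>2) \<partial>weighted_torus (bipoly c n m))
              < ennreal \<epsilon>"
proof (intro allI impI)
  fix \<epsilon> :: real assume eps: "\<epsilon> > 0"
  have pnz: "bipoly c n m z w \<noteq> 0" if "cmod z = 1" "cmod w = 1" for z w
    using stab that unfolding stable2_def by auto
  obtain \<mu> where mu: "\<mu> > 0" "\<And>z w. cmod z = 1 \<Longrightarrow> cmod w = 1 \<Longrightarrow> \<mu> \<le> cmod (bipoly c n m z w)"
    using torus_lower[OF cont_bipoly[of c n m]] pnz by auto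
  define \<eta> where "\<eta> = \<mu> * sqrt (\<epsilon> / 2)"
  have eta: "\<eta> > 0" using mu eps by (simp add: \<eta>_def)
  obtain f where f: "rep n m f" and fb: "\<And>z w. cmod z = 1 \<Longrightarrow> cmod w = 1 \<Longrightarrow> cmod (K (z, w) - f (z, w)) \<le> \<eta>"
    using approx_K[OF z1 w1 eta, where c=c and n=n and m=m] unfolding K by auto
  obtain F a where F: "finite F" "F \<subseteq> idx_set n m" "\<And>x. f x = mono_comb F a x"
    using f unfolding rep_def by blast
  have bnd: "1 / (cmod (bipoly c n m z w))\<^sup>2 * (cmod (K (z, w) - mono_comb F a (z, w)))\<^sup>2 \<le> \<epsilon> / 2"
    if z: "cmod z = 1" and w: "cmod w = 1" for z w
  proof -
    have p: "\<mu>\<^sup>2 \<le> (cmod (bipoly c n m z w))\<^sup>2" using mu z w by (intro power_mono) auto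
    have e: "(cmod (K (z, w) - mono_comb F a (z, w)))\<^sup>2 \<le> \<eta>\<^sup>2"
      using fb[OF z w] F(3) by (intro power_mono) auto
    have "1 / (cmod (bipoly c n m z w))\<^sup>2 * (cmod (K (z, w) - mono_comb F a (z, w)))\<^sup>2 \<le> 1 / \<mu>\<^sup>2 * \<eta>\<^sup>2"
      by (intro mult_mono e divide_left_mono p) (use mu z w pnz[OF z w] in auto)
    also have "\<dots> = \<epsilon> / 2" using mu eps by (simp add: \<eta>_def power_mult_distrib)
    finally show ?thesis .
  qed
  have pm: "(\<lambda>x. bipoly c n m (fst x) (snd x)) \<in> borel_measurable borel"
    by (rule meas_pair[OF cont_bipoly])
  have prm: "(\<lambda>x. bipoly_refl c n m (fst x) (snd x)) \<in> borel_measurable borel"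
    by (rule meas_pair[OF cont_bipoly_refl])
  have mm: "(\<lambda>x. mono_comb F a x) \<in> borel_measurable borel"
    by (rule meas_pair[OF cont_mono_comb])
  have nm: "(\<lambda>x. bipoly c n m (fst x) (snd x) * cnj (bipoly c n m z1 w1)
                   - bipoly_refl c n m (fst x) (snd x) * cnj (bipoly_refl c n m z1 w1)) \<in> borel_measurable borel"
    by (rule meas_pair) (intro continuous_intros cont_bipoly cont_bipoly_refl)
  have dm: "(\<lambda>x. (1 - fst x * cnj z1) * (1 - snd x * cnj w1)) \<in> borel_measurable borel"
    by (rule meas_pair) (intro continuous_intros)
  have Km: "K \<in> borel_measurable borel" unfolding K using borel_measurable_divide[OF nm dm] by simp
  have rm: "(\<lambda>x. ennreal (1 / (cmod (bipoly c n m (fst x) (snd x)))\<^sup>2)) \<in> borel_measurable borel"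
    using pm by measurable
  have gm: "(\<lambda>x. ennreal (1 / (cmod (bipoly c n m (fst x) (snd x)))\<^sup>2) * ennreal ((cmod (K x - mono_comb F a x))\<^sup>2)) \<in> borel_measurable borel"
    using pm Km mm by measurable
  have "(\<integral>\<^sup>+ x. ennreal ((cmod (K x - mono_comb F a x))\<^sup>2) \<partial>weighted_torus (bipoly c n m))
      = (\<integral>\<^sup>+ x. ennreal (1 / (cmod (bipoly c n m (fst x) (snd x)))\<^sup>2) * ennreal ((cmod (K x - mono_comb F a x))\<^sup>2) \<partial>torus_measure)"
    unfolding weighted_torus_def
    by (rule nn_integral_density) (use rm Km mm in \<open>measurable, auto simp: torus_measure_def\<close>)
  also have "\<dots> = (\<integral>\<^sup>+ y. ennreal (1 / (cmod (bipoly c n m (cis (fst y)) (cis (snd y))))\<^sup>2)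
        * ennreal ((cmod (K (cis (fst y), cis (snd y)) - mono_comb F a (cis (fst y), cis (snd y))))\<^sup>2) \<partial>uniform_measure lborel SQ)"
    unfolding torus_measure_def
    by (subst nn_integral_distr[OF phi_meas]) (use gm in \<open>auto simp: case_prod_unfold\<close>)
  also have "\<dots> \<le> (\<integral>\<^sup>+ y. ennreal (\<epsilon> / 2) \<partial>uniform_measure lborel SQ)"
  proof (rule nn_integral_mono)
    fix y :: "real \<times> real"
    show "ennreal (1 / (cmod (bipoly c n m (cis (fst y)) (cis (snd y))))\<^sup>2)
        * ennreal ((cmod (K (cis (fst y), cis (snd y)) - mono_comb F a (cis (fst y), cis (snd y))))\<^sup>2) \<le> ennreal (\<epsilon> / 2)"
      by (subst ennreal_mult[symmetric]) (auto intro!: ennreal_leI bnd[of "cis (fst y)" "cis (snd y)", simplified])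
  qed
  also have "\<dots> = ennreal (\<epsilon> / 2)" using unif_space by (simp only: nn_integral_const) simp
  also have "\<dots> < ennreal \<epsilon>" using eps by (simp add: ennreal_lessI)
  finally show "\<exists>F a. finite F \<and> F \<subseteq> idx_set n m \<and>
            (\<integral>\<^sup>+ x. ennreal ((cmod (K x - mono_comb F a x))\<^sup>2) \<partial>weighted_torus (bipoly c n m)) < ennreal \<epsilon>"
    using F by blast
qed

end


definition isp :: "(complex \<Rightarrow> complex) \<Rightarrow> bool" where "isp f \<longleftrightarrow> (\<exists>q. \<forall>z. f z = poly q z)"

lemma isp_const: "isp (\<lambda>z. c)" unfolding isp_def by (intro exI[of _ "[:c:]"]) simp
lemma isp_id: "isp (\<lambda>z. z)" unfolding isp_def by (intro exI[of _ "[:0, 1:]"]) simp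
lemma isp_add: "isp f \<Longrightarrow> isp g \<Longrightarrow> isp (\<lambda>z. f z + g z)"
  unfolding isp_def by (metis poly_add)
lemma isp_mult: "isp f \<Longrightarrow> isp g \<Longrightarrow> isp (\<lambda>z. f z * g z)"
  unfolding isp_def by (metis poly_mult)
lemma isp_pow: "isp f \<Longrightarrow> isp (\<lambda>z. f z ^ k)"
  unfolding isp_def by (metis poly_power)
lemma isp_sum:
  assumes "\<And>k. k \<in> A \<Longrightarrow> isp (f k)" shows "isp (\<lambda>z. \<Sum>k\<in>A. f k z)"
proof (cases "finite A")
  case True
  show ?thesis using True assms
    by (induction A rule: finite_induct) (auto intro: isp_const isp_add)
qed (simp add: isp_const)
lemma isp_diff: "isp f \<Longrightarrow> isp g \<Longrightarrow> isp (\<lambda>z. f z - g z)"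
  using isp_add[of f "\<lambda>z. (-1) * g z"] isp_mult[OF isp_const, of g "-1"] by simp

lemma good_isp:
  assumes "isp f" "isp g" "\<And>z. cmod z \<le> 1 \<Longrightarrow> g z \<noteq> 0"
  shows "good (\<lambda>z. f z / g z)"
proof -
  obtain p where p: "\<And>z. f z = poly p z" using assms(1) unfolding isp_def by blast
  obtain q where q: "\<And>z. g z = poly q z" using assms(2) unfolding isp_def by blast
  have "good (\<lambda>z. poly p z / poly q z)" using assms(3) q by (intro good_ratio) auto
  then show ?thesis by (simp add: p q)
qed

lemma isp_bipoly1: "isp (\<lambda>z. bipoly c n m z w)"
  unfolding bipoly_def by (intro isp_sum isp_mult isp_const isp_pow isp_id)
lemma isp_bipoly2: "isp (\<lambda>w. bipoly c n m z w)"
  unfolding bipoly_def by (intro isp_sum isp_mult isp_const isp_pow isp_id)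
lemma isp_mono1: "isp (\<lambda>z. mono_comb F a (z, w))"
  unfolding mono_comb_def split_def fst_conv snd_conv by (intro isp_sum isp_mult isp_const isp_pow isp_id)
lemma isp_mono2: "isp (\<lambda>w. mono_comb F a (z, w))"
  unfolding mono_comb_def split_def fst_conv snd_conv by (intro isp_sum isp_mult isp_const isp_pow isp_id)

lemma ci_cong: assumes "\<And>s. f s = g s" shows "ci f = ci g"
  using ext[of f g, OF assms] by simp

lemma cnj_pow_diff: "cmod z = 1 \<Longrightarrow> i \<le> n \<Longrightarrow> cnj z ^ (n - i) = cnj z ^ n * z ^ i"
proof -
  assume z: "cmod z = 1" and i: "i \<le> n"
  have zz: "cnj z * z = 1" using complex_norm_square[of z] z by (simp add: mult.commute)
  have "cnj z ^ n * z ^ i = cnj z ^ (n - i) * (cnj z * z) ^ i"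
    using i by (simp add: power_mult_distrib mult_ac flip: power_add)
  then show ?thesis by (simp add: zz)
qed

lemma cnj_pow_shift: "cmod z = 1 \<Longrightarrow> i < n \<Longrightarrow> cnj z ^ i * z ^ n = z * z ^ (n - Suc i)"
proof -
  assume z: "cmod z = 1" and i: "i < n"
  have zz: "cnj z * z = 1" using complex_norm_square[of z] z by (simp add: mult.commute)
  have "cnj z ^ i * z ^ n = (cnj z * z) ^ i * z ^ (n - i)"
    using i by (simp add: power_mult_distrib mult_ac flip: power_add)
  also have "\<dots> = z * z ^ (n - Suc i)" using i by (simp add: zz Suc_diff_Suc flip: power_Suc)
  finally show ?thesis .
qed

lemma cnj_refl:
  assumes "cmod z = 1" "cmod w = 1"
  shows "cnj (bipoly_refl c n m z w) = cnj z ^ n * cnj w ^ m * bipoly c n m z w"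
proof -
  have "cnj (bipoly_refl c n m z w) = (\<Sum>i\<le>n. \<Sum>j\<le>m. c i j * cnj z ^ (n - i) * cnj w ^ (m - j))"
    unfolding bipoly_refl_def by (simp add: cnj_sum)
  also have "\<dots> = (\<Sum>i\<le>n. \<Sum>j\<le>m. cnj z ^ n * cnj w ^ m * (c i j * z ^ i * w ^ j))"
    by (intro sum.cong refl) (simp add: cnj_pow_diff[OF assms(1)] cnj_pow_diff[OF assms(2)] mult_ac)
  also have "\<dots> = cnj z ^ n * cnj w ^ m * bipoly c n m z w"
    unfolding bipoly_def by (simp add: sum_distrib_left)
  finally show ?thesis .
qed

lemma cont_bipoly_comp[continuous_intros]:
  "continuous_on S f \<Longrightarrow> continuous_on S g \<Longrightarrow> continuous_on S (\<lambda>x. bipoly c n m (f x) (g x))"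
  unfolding bipoly_def by (intro continuous_intros)
lemma cont_bipoly_refl_comp[continuous_intros]:
  "continuous_on S f \<Longrightarrow> continuous_on S g \<Longrightarrow> continuous_on S (\<lambda>x. bipoly_refl c n m (f x) (g x))"
  unfolding bipoly_refl_def by (intro continuous_intros)
lemma cont_mono_comb_comp[continuous_intros]:
  "continuous_on S f \<Longrightarrow> continuous_on S (\<lambda>x. mono_comb F a (f x))"
  unfolding mono_comb_def split_def by (intro continuous_intros)

lemma meas_cnj: "f \<in> borel_measurable M \<Longrightarrow> (\<lambda>x. cnj (f x)) \<in> borel_measurable M"
  using measurable_compose[OF _ borel_measurable_continuous_onI[OF continuous_on_cnj[OF continuous_on_id]]]
  by blast

lemma meas_div_cont:
  fixes N D :: "'a::topological_space \<Rightarrow> complex"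
  shows "continuous_on UNIV N \<Longrightarrow> continuous_on UNIV D \<Longrightarrow> (\<lambda>x. N x / D x) \<in> borel_measurable borel"
  by (intro borel_measurable_divide borel_measurable_continuous_onI)


context
  fixes c :: "nat \<Rightarrow> nat \<Rightarrow> complex" and n m :: nat and z1 w1 :: complex
  assumes stab: "stable2 (bipoly c n m)" and z1: "cmod z1 < 1" and w1: "cmod w1 < 1"
begin

lemma pnz: "cmod z \<le> 1 \<Longrightarrow> cmod w \<le> 1 \<Longrightarrow> bipoly c n m z w \<noteq> 0"
  using stab unfolding stable2_def by auto

lemma one_minus_nz: "cmod u \<le> 1 \<Longrightarrow> cmod v < 1 \<Longrightarrow> 1 - u * v \<noteq> 0"
proof
  assume u: "cmod u \<le> 1" and v: "cmod v < 1" and e: "1 - u * v = 0"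
  have "cmod u * cmod v \<le> cmod v" by (rule mult_left_le_one_le) (use u in auto)
  then have "cmod (u * v) < 1" using v by (simp add: norm_mult)
  moreover have "u * v = 1" using e by simp
  ultimately show False by simp
qed

lemma dz1: "cmod z \<le> 1 \<Longrightarrow> 1 - cnj z * z1 \<noteq> 0"
  using one_minus_nz[of "cnj z" z1] z1 by simp
lemma dz2: "cmod z \<le> 1 \<Longrightarrow> 1 - z * cnj z1 \<noteq> 0"
  using one_minus_nz[of z "cnj z1"] z1 by simp
lemma dw1: "cmod w \<le> 1 \<Longrightarrow> 1 - cnj w * w1 \<noteq> 0"
  using one_minus_nz[of "cnj w" w1] w1 by simp
lemma dw2: "cmod w \<le> 1 \<Longrightarrow> 1 - w * cnj w1 \<noteq> 0"
  using one_minus_nz[of w "cnj w1"] w1 by simp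

lemma int_g1:
  "ci (\<lambda>t. ci (\<lambda>s. mono_comb F a (cis s, cis t) / (bipoly c n m (cis s) (cis t)
      * ((1 - cnj (cis s) * z1) * (1 - cnj (cis t) * w1)))))
   = (2 * pi) * ((2 * pi) * (mono_comb F a (z1, w1) / bipoly c n m z1 w1))"
proof -
  have inner: "ci (\<lambda>s. mono_comb F a (cis s, w) / (bipoly c n m (cis s) w
      * ((1 - cnj (cis s) * z1) * (1 - cnj w * w1))))
      = 2 * pi * (mono_comb F a (z1, w) / bipoly c n m z1 w / (1 - cnj w * w1))"
    if w: "cmod w = 1" for w
  proof -
    let ?h = "\<lambda>z. mono_comb F a (z, w) / (bipoly c n m z w * (1 - cnj w * w1))"
    have g: "good ?h"
      by (intro good_isp isp_mono1 isp_mult isp_bipoly1 isp_const)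
         (use w pnz dw1 in auto)
    have "ci (\<lambda>s. mono_comb F a (cis s, w) / (bipoly c n m (cis s) w
      * ((1 - cnj (cis s) * z1) * (1 - cnj w * w1)))) = ci (\<lambda>s. ?h (cis s) / (1 - cnj (cis s) * z1))"
      by (intro ci_cong) (simp add: divide_divide_eq_left mult_ac)
    also have "\<dots> = 2 * pi * ?h z1" by (rule good_ci[OF g z1])
    finally show ?thesis by (simp add: divide_divide_eq_left)
  qed
  let ?k = "\<lambda>w. mono_comb F a (z1, w) / bipoly c n m z1 w"
  have gk: "good ?k"
    by (intro good_isp isp_mono2 isp_bipoly2) (use z1 pnz in auto)
  have "ci (\<lambda>t. ci (\<lambda>s. mono_comb F a (cis s, cis t) / (bipoly c n m (cis s) (cis t)
      * ((1 - cnj (cis s) * z1) * (1 - cnj (cis t) * w1)))))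
      = ci (\<lambda>t. (2 * pi) * (?k (cis t) / (1 - cnj (cis t) * w1)))"
    by (intro ci_cong) (simp add: inner)
  also have "\<dots> = (2 * pi) * ((2 * pi) * ?k w1)"
    by (simp only: ci_cmult good_ci[OF gk w1])
  finally show ?thesis .
qed

lemma ci_zero: "ci (\<lambda>s. 0) = 0"
  unfolding ci_def by simp

lemma int_T1:
  assumes i: "i < n"
  shows "ci (\<lambda>t. ci (\<lambda>s. al * cnj (cis s) ^ i * cnj (cis t) ^ j * cis s ^ n * cis t ^ m
      / (bipoly c n m (cis s) (cis t) * ((1 - cis s * cnj z1) * (1 - cis t * cnj w1))))) = 0"
proof -
  have inner: "ci (\<lambda>s. al * cnj (cis s) ^ i * cnj w ^ j * cis s ^ n * w ^ m
      / (bipoly c n m (cis s) w * ((1 - cis s * cnj z1) * (1 - w * cnj w1)))) = 0"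
    if w: "cmod w = 1" for w
  proof -
    let ?h = "\<lambda>z. al * cnj w ^ j * w ^ m * z ^ (n - Suc i)
      / (bipoly c n m z w * ((1 - z * cnj z1) * (1 - w * cnj w1)))"
    have g: "good ?h"
      by (intro good_isp isp_mult isp_const isp_pow isp_id isp_bipoly1 isp_diff)
         (use w pnz dz2 dw2 in auto)
    have "ci (\<lambda>s. al * cnj (cis s) ^ i * cnj w ^ j * cis s ^ n * w ^ m
      / (bipoly c n m (cis s) w * ((1 - cis s * cnj z1) * (1 - w * cnj w1))))
      = ci (\<lambda>s. cis s * ?h (cis s))"
    proof (intro ci_cong)
      fix s
      have e: "cnj (cis s) ^ i * cis s ^ n = cis s * cis s ^ (n - Suc i)"
        by (rule cnj_pow_shift) (use i in auto)
      have "al * cnj (cis s) ^ i * cnj w ^ j * cis s ^ n * w ^ m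
          = al * cnj w ^ j * w ^ m * (cnj (cis s) ^ i * cis s ^ n)" by (simp add: mult_ac)
      also have "\<dots> = cis s * (al * cnj w ^ j * w ^ m * cis s ^ (n - Suc i))" unfolding e by (simp add: mult_ac)
      finally show "al * cnj (cis s) ^ i * cnj w ^ j * cis s ^ n * w ^ m
          / (bipoly c n m (cis s) w * ((1 - cis s * cnj z1) * (1 - w * cnj w1))) = cis s * ?h (cis s)"
        by simp
    qed
    also have "\<dots> = 2 * pi * (0 * ?h 0)"
      using good_mean[OF good_mult[OF good_id g]] by simp
    finally show ?thesis by simp
  qed
  show ?thesis by (subst ci_cong[OF inner]) (simp_all add: ci_zero)
qed

lemma int_T2:
  assumes j: "j < m"
  shows "ci (\<lambda>s. ci (\<lambda>t. al * cnj (cis s) ^ i * cnj (cis t) ^ j * cis s ^ n * cis t ^ m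
      / (bipoly c n m (cis s) (cis t) * ((1 - cis s * cnj z1) * (1 - cis t * cnj w1))))) = 0"
proof -
  have inner: "ci (\<lambda>t. al * cnj z ^ i * cnj (cis t) ^ j * z ^ n * cis t ^ m
      / (bipoly c n m z (cis t) * ((1 - z * cnj z1) * (1 - cis t * cnj w1)))) = 0"
    if z: "cmod z = 1" for z
  proof -
    let ?h = "\<lambda>w. al * cnj z ^ i * z ^ n * w ^ (m - Suc j)
      / (bipoly c n m z w * ((1 - z * cnj z1) * (1 - w * cnj w1)))"
    have g: "good ?h"
      by (intro good_isp isp_mult isp_const isp_pow isp_id isp_bipoly2 isp_diff)
         (use z pnz dz2 dw2 in auto)
    have "ci (\<lambda>t. al * cnj z ^ i * cnj (cis t) ^ j * z ^ n * cis t ^ m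
      / (bipoly c n m z (cis t) * ((1 - z * cnj z1) * (1 - cis t * cnj w1))))
      = ci (\<lambda>t. cis t * ?h (cis t))"
    proof (intro ci_cong)
      fix t
      have e: "cnj (cis t) ^ j * cis t ^ m = cis t * cis t ^ (m - Suc j)"
        by (rule cnj_pow_shift) (use j in auto)
      have "al * cnj z ^ i * cnj (cis t) ^ j * z ^ n * cis t ^ m
          = al * cnj z ^ i * z ^ n * (cnj (cis t) ^ j * cis t ^ m)" by (simp add: mult_ac)
      also have "\<dots> = cis t * (al * cnj z ^ i * z ^ n * cis t ^ (m - Suc j))" unfolding e by (simp add: mult_ac)
      finally show "al * cnj z ^ i * cnj (cis t) ^ j * z ^ n * cis t ^ m
          / (bipoly c n m z (cis t) * ((1 - z * cnj z1) * (1 - cis t * cnj w1))) = cis t * ?h (cis t)"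
        by simp
    qed
    also have "\<dots> = 2 * pi * (0 * ?h 0)"
      using good_mean[OF good_mult[OF good_id g]] by simp
    finally show ?thesis by simp
  qed
  show ?thesis by (subst ci_cong[OF inner]) (simp_all add: ci_zero)
qed

lemma G_eq:
  assumes z: "cmod z = 1" and w: "cmod w = 1"
  shows "(1 / (cmod (bipoly c n m z w))\<^sup>2) *\<^sub>R (f0 * cnj ((bipoly c n m z w * cnj (bipoly c n m z1 w1)
      - bipoly_refl c n m z w * cnj (bipoly_refl c n m z1 w1)) / ((1 - z * cnj z1) * (1 - w * cnj w1))))
    = bipoly c n m z1 w1 * (f0 / (bipoly c n m z w * ((1 - cnj z * z1) * (1 - cnj w * w1))))
      - bipoly_refl c n m z1 w1 * cnj (cnj f0 * z ^ n * w ^ m / (bipoly c n m z w * ((1 - z * cnj z1) * (1 - w * cnj w1))))"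
proof -
  define p0 where "p0 = bipoly c n m z w"
  have p0: "p0 \<noteq> 0" unfolding p0_def using pnz z w by auto
  have cp0: "cnj p0 \<noteq> 0" using p0 by simp
  have d1: "1 - cnj z * z1 \<noteq> 0" using dz1 z by auto
  have d2: "1 - cnj w * w1 \<noteq> 0" using dw1 w by auto
  have sq: "(1 / (cmod p0)\<^sup>2) *\<^sub>R X = X / (p0 * cnj p0)" for X
    by (simp add: scaleR_conv_of_real complex_norm_square[symmetric] divide_inverse mult.commute of_real_inverse)
  have cr: "cnj (bipoly_refl c n m z w) = cnj z ^ n * cnj w ^ m * p0"
    unfolding p0_def by (rule cnj_refl[OF z w])
  define cD where "cD = (1 - cnj z * z1) * (1 - cnj w * w1)"
  have cD: "cD \<noteq> 0" unfolding cD_def using d1 d2 by simp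
  have e: "cnj ((p0 * cnj (bipoly c n m z1 w1) - bipoly_refl c n m z w * cnj (bipoly_refl c n m z1 w1))
      / ((1 - z * cnj z1) * (1 - w * cnj w1)))
      = (cnj p0 * bipoly c n m z1 w1 - (cnj z ^ n * cnj w ^ m) * p0 * bipoly_refl c n m z1 w1) / cD"
    unfolding cD_def by (simp add: cr mult_ac)
  have e2: "cnj (cnj f0 * z ^ n * w ^ m / (p0 * ((1 - z * cnj z1) * (1 - w * cnj w1))))
      = f0 * (cnj z ^ n * cnj w ^ m) / (cnj p0 * cD)"
    unfolding cD_def by (simp add: mult_ac)
  have alg: "f * ((cp * P - X * p * Q) / cD) / (p * cp) = P * (f / (p * cD)) - Q * (f * X / (cp * cD))"
    if "p \<noteq> 0" "cp \<noteq> 0" "cD \<noteq> 0" for f cp P X p Q :: complex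
    using that by (simp add: field_simps)
  show ?thesis
    unfolding p0_def[symmetric] sq e e2 cD_def[symmetric]
    by (rule alg[OF p0 cp0 cD])
qed

lemma part2:
  assumes F: "finite F" "F \<subseteq> idx_set n m"
    and K: "K = (\<lambda>x. (bipoly c n m (fst x) (snd x) * cnj (bipoly c n m z1 w1)
                   - bipoly_refl c n m (fst x) (snd x) * cnj (bipoly_refl c n m z1 w1))
                  / ((1 - fst x * cnj z1) * (1 - snd x * cnj w1)))"
  shows "integrable (weighted_torus (bipoly c n m)) (\<lambda>x. mono_comb F a x * cnj (K x)) \<and>
            mono_comb F a (z1, w1) =
              integral\<^sup>L (weighted_torus (bipoly c n m)) (\<lambda>x. mono_comb F a x * cnj (K x))"
proof -
  have [simp]: "bipoly c n m (cis s) (cis t) \<noteq> 0" for s t using pnz by simp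
  have [simp]: "1 - cis s * cnj z1 \<noteq> 0" "1 - cnj (cis s) * z1 \<noteq> 0" for s using dz1 dz2 by simp_all
  have [simp]: "1 - cis s * cnj w1 \<noteq> 0" "1 - cnj (cis s) * w1 \<noteq> 0" for s using dw1 dw2 by simp_all
  have [simp]: "cis s * cnj z1 \<noteq> 1" "cnj (cis s) * z1 \<noteq> 1" for s
    using dz1[of "cis s"] dz2[of "cis s"] by auto
  have [simp]: "cis s * cnj w1 \<noteq> 1" "cnj (cis s) * w1 \<noteq> 1" for s
    using dw1[of "cis s"] dw2[of "cis s"] by auto
  define P1 where "P1 = bipoly c n m z1 w1"
  define Q1 where "Q1 = bipoly_refl c n m z1 w1"
  have P1: "P1 \<noteq> 0" unfolding P1_def using pnz z1 w1 by simp
  define \<rho> where "\<rho> = (\<lambda>x. 1 / (cmod (bipoly c n m (fst x) (snd x)))\<^sup>2)"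
  have pm: "(\<lambda>x. bipoly c n m (fst x) (snd x)) \<in> borel_measurable borel"
    by (rule borel_measurable_continuous_onI[OF cont_bipoly])
  have \<rho>m: "\<rho> \<in> borel_measurable borel" unfolding \<rho>_def using pm by measurable
  have Km: "K \<in> borel_measurable borel"
    unfolding K by (intro meas_div_cont continuous_intros)
  have fm: "mono_comb F a \<in> borel_measurable borel" by (rule borel_measurable_continuous_onI[OF cont_mono_comb])
  have fKm: "(\<lambda>x. mono_comb F a x * cnj (K x)) \<in> borel_measurable borel"
    by (rule borel_measurable_times[OF fm meas_cnj[OF Km]])
  define G where "G = (\<lambda>x. \<rho> x *\<^sub>R (mono_comb F a x * cnj (K x)))"
  have Gm: "G \<in> borel_measurable borel" unfolding G_def by (rule borel_measurable_scaleR[OF \<rho>m fKm])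
  have Gc: "continuous_on UNIV (\<lambda>x. G (cis (fst x), cis (snd x)))"
    unfolding G_def \<rho>_def K by (auto intro!: continuous_intros)
  have W: "weighted_torus (bipoly c n m) = density torus_measure (\<lambda>x. ennreal (\<rho> x))"
    unfolding weighted_torus_def \<rho>_def ..
  have sp: "space torus_measure = UNIV" by (simp add: torus_measure_def)
  have AEnn: "AE x in torus_measure. 0 \<le> \<rho> x" by (simp add: \<rho>_def)
  have int: "integrable (weighted_torus (bipoly c n m)) (\<lambda>x. mono_comb F a x * cnj (K x))"
    unfolding W
    by (subst integrable_density) (use fKm \<rho>m AEnn torus_int(1)[OF Gm Gc] in \<open>auto simp: G_def torus_measure_def\<close>)
  have v1: "integral\<^sup>L (weighted_torus (bipoly c n m)) (\<lambda>x. mono_comb F a x * cnj (K x)) = integral\<^sup>L torus_measure G"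
    unfolding W G_def
    by (rule integral_density) (use fKm \<rho>m AEnn in \<open>auto simp: torus_measure_def\<close>)
  define g1 where "g1 = (\<lambda>x. mono_comb F a x / (bipoly c n m (fst x) (snd x)
      * ((1 - cnj (fst x) * z1) * (1 - cnj (snd x) * w1))))"
  define g2 where "g2 = (\<lambda>x. cnj (mono_comb F a x) * fst x ^ n * snd x ^ m / (bipoly c n m (fst x) (snd x)
      * ((1 - fst x * cnj z1) * (1 - snd x * cnj w1))))"
  have g1m: "g1 \<in> borel_measurable borel" unfolding g1_def by (intro meas_div_cont continuous_intros)
  have g2m: "g2 \<in> borel_measurable borel" unfolding g2_def by (intro meas_div_cont continuous_intros)
  have g1c: "continuous_on UNIV (\<lambda>x. g1 (cis (fst x), cis (snd x)))"
    unfolding g1_def by (auto intro!: continuous_intros)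
  have g2c: "continuous_on UNIV (\<lambda>x. g2 (cis (fst x), cis (snd x)))"
    unfolding g2_def by (auto intro!: continuous_intros)
  define H where "H = (\<lambda>x. P1 * g1 x - Q1 * cnj (g2 x))"
  have Hm: "H \<in> borel_measurable borel" unfolding H_def
    using g1m g2m by (intro borel_measurable_diff borel_measurable_times meas_cnj) auto
  have Hc: "continuous_on UNIV (\<lambda>x. H (cis (fst x), cis (snd x)))"
    unfolding H_def using g1c g2c by (intro continuous_intros) auto
  have GH: "G (cis s, cis t) = H (cis s, cis t)" for s t
    unfolding G_def H_def g1_def g2_def \<rho>_def P1_def Q1_def K
    using G_eq[of "cis s" "cis t" "mono_comb F a (cis s, cis t)"] by simp
  have "integral\<^sup>L torus_measure G = integral\<^sup>L torus_measure H"
    unfolding torus_int(2)[OF Gm Gc] torus_int(2)[OF Hm Hc] GH ..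
  also have "\<dots> = P1 * integral\<^sup>L torus_measure g1 - Q1 * cnj (integral\<^sup>L torus_measure g2)"
    unfolding H_def using torus_int(1)[OF g1m g1c] torus_int(1)[OF g2m g2c]
    by (simp add: integral_mult_right_zero)
  also have "integral\<^sup>L torus_measure g1 = mono_comb F a (z1, w1) / P1"
    unfolding torus_int(3)[OF g1m g1c] unfolding g1_def P1_def
    by (simp add: int_g1 power2_eq_square)
  also have "integral\<^sup>L torus_measure g2 = 0"
  proof -
    define T where "T = (\<lambda>k x. cnj (a k) * cnj (fst x) ^ fst k * cnj (snd x) ^ snd k * fst x ^ n * snd x ^ m
      / (bipoly c n m (fst x) (snd x) * ((1 - fst x * cnj z1) * (1 - snd x * cnj w1))))"
    have Tm: "T k \<in> borel_measurable borel" for k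
      unfolding T_def by (intro meas_div_cont continuous_intros)
    have Tc: "continuous_on UNIV (\<lambda>x. T k (cis (fst x), cis (snd x)))" for k
      unfolding T_def by (auto intro!: continuous_intros)
    have g2T: "g2 = (\<lambda>x. \<Sum>k\<in>F. T k x)"
      unfolding g2_def T_def mono_comb_def
      by (simp add: cnj_sum split_def sum_distrib_right sum_divide_distrib)
    have "integral\<^sup>L torus_measure g2 = (\<Sum>k\<in>F. integral\<^sup>L torus_measure (T k))"
      unfolding g2T by (rule Bochner_Integration.integral_sum) (use torus_int(1)[OF Tm Tc] in auto)
    also have "\<dots> = 0"
    proof (intro sum.neutral ballI)
      fix k assume k: "k \<in> F"
      then have nk: "\<not> (n \<le> fst k \<and> m \<le> snd k)" using F(2) by (auto simp: idx_set_def)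
      show "integral\<^sup>L torus_measure (T k) = 0"
      proof (cases "fst k < n")
        case True
        show ?thesis unfolding torus_int(3)[OF Tm Tc] unfolding T_def
          using int_T1[OF True, of "cnj (a k)" "snd k"] by simp
      next
        case False
        then have "snd k < m" using nk by auto
        then show ?thesis unfolding torus_int(2)[OF Tm Tc] unfolding T_def
          using int_T2[of "snd k" "cnj (a k)" "fst k"] by simp
      qed
    qed
    finally show ?thesis .
  qed
  finally have "integral\<^sup>L torus_measure G = mono_comb F a (z1, w1)" using P1 by simp
  then show ?thesis using int v1 by simp
qed

end


theorem mainTheorem8:
  fixes c :: "nat \<Rightarrow> nat \<Rightarrow> complex" and n m :: nat and z1 w1 :: complex
    and K :: "complex \<times> complex \<Rightarrow> complex"
  assumes "n \<ge> 1" and "m \<ge> 1"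
    and "\<exists>j\<le>m. c n j \<noteq> 0" and "\<exists>i\<le>n. c i m \<noteq> 0"
    and "stable2 (bipoly c n m)"
    and "cmod z1 < 1" and "cmod w1 < 1"
    and "K = (\<lambda>x. (bipoly c n m (fst x) (snd x) * cnj (bipoly c n m z1 w1)
                   - bipoly_refl c n m (fst x) (snd x) * cnj (bipoly_refl c n m z1 w1))
                  / ((1 - fst x * cnj z1) * (1 - snd x * cnj w1)))"
  shows "(\<forall>\<epsilon>>0. \<exists>F a. finite F \<and> F \<subseteq> idx_set n m \<and>
            (\<integral>\<^sup>+ x. ennreal ((cmod (K x - mono_comb F a x))\<^sup>2) \<partial>weighted_torus (bipoly c n m))
              < ennreal \<epsilon>)
       \<and> (\<forall>F a. finite F \<and> F \<subseteq> idx_set n m \<longrightarrow>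
            integrable (weighted_torus (bipoly c n m)) (\<lambda>x. mono_comb F a x * cnj (K x)) \<and>
            mono_comb F a (z1, w1) =
              integral\<^sup>L (weighted_torus (bipoly c n m)) (\<lambda>x. mono_comb F a x * cnj (K x)))"
proof -
  have p1: "\<forall>\<epsilon>>0. \<exists>F a. finite F \<and> F \<subseteq> idx_set n m \<and>
            (\<integral>\<^sup>+ x. ennreal ((cmod (K x - mono_comb F a x))\<^sup>2) \<partial>weighted_torus (bipoly c n m))
              < ennreal \<epsilon>"
    by (rule part1[OF assms(5) assms(6) assms(7) assms(8)])
  have p2: "integrable (weighted_torus (bipoly c n m)) (\<lambda>x. mono_comb F a x * cnj (K x)) \<and>
            mono_comb F a (z1, w1) =
              integral\<^sup>L (weighted_torus (bipoly c n m)) (\<lambda>x. mono_comb F a x * cnj (K x))"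
    if "finite F" "F \<subseteq> idx_set n m" for F a
    by (rule part2[OF assms(5) assms(6) assms(7) that assms(8)])
  show ?thesis using p1 p2 by blast
qed

end
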